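(* Let $\phi$ be a partial listing of $A$, let $\alpha'=\alpha_k\cdots\alpha_{l+1}$ be a prefix with $3\le l+1\le k$, and let $d$ be an integer with $0<d<a_2-1$. If $\alpha'd$ is non-empty, then $\alpha'(d-1)$ is non-empty, and $\alpha'(d+1)$ becomes non-empty after at most one further call to Next$(\varnothing)$.
   Context: Let $k\ge 2$ and let $a_k,\dots,a_2$ be positive integers with $a_2\le a_i$ for all $2<i\le k$. Let $A=[a_k]\times\cdots\times[a_2]$, where $[a]=\{0,\dots,a-1\}$; elements are written $\alpha=\alpha_k\alpha_{k-1}\cdots\alpha_2$. A prefix of $\alpha$ is $\alpha_k\cdots\alpha_{l+1}$ for some $2\le l+1\le k$; $\varnothing$ denotes the empty prefix; for a tuple $\beta=\alpha_k\cdots\alpha_{l+1}$ and $i$, $\beta i$ denotes $\alpha_k\cdots\alpha_{l+1}i$. An array $\phi:A\to\{0,1\}$ is initialized to $0$ everywhere. A tuple $\beta$ (a prefix or an element) is non-empty if some $\alpha\in A$ having $\beta$ as a prefix (or equal to $\beta$) has $\phi(\alpha)=1$, empty otherwise, and full if all such $\alpha$ have $\phi(\alpha)=1$. The procedure Next$(\beta)$, for $\beta=\alpha_k\cdots\alpha_{l+1}$ (with $l=k$ for $\beta=\varnothing$): let $m$ be the least $i$ such that $\beta i$ is empty; if $l=2$, set $\phi(\beta m):=1$ and stop; otherwise, if $m\ge a_2$, replace $m$ by the least $i$ such that $\beta i$ is not full; then call Next$(\beta m)$. A partial listing of $A$ is an array $\phi$ obtained from the all-zero array by finitely many calls of Next$(\varnothing)$.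 *)

theory Defs
  imports Main
begin

text \<open>Tuples \<alpha> = \<alpha>_k \<alpha>_{k-1} ... \<alpha>_2 are represented as lists [\<alpha>_k, ..., \<alpha>_2];
  position j of the list holds coordinate number k - j, ranging over [a (k - j)].
  A prefix \<alpha>_k ... \<alpha>_{l+1} is a list of length k - l.
  The array \<phi> is represented by the set of tuples where \<phi> = 1.\<close>

definition inA :: "(nat \<Rightarrow> nat) \<Rightarrow> nat \<Rightarrow> nat list \<Rightarrow> bool" where
  "inA a k xs \<longleftrightarrow> length xs = k - 1 \<and> (\<forall>j < length xs. xs ! j < a (k - j))"

definition is_prefix_tuple :: "(nat \<Rightarrow> nat) \<Rightarrow> nat \<Rightarrow> nat list \<Rightarrow> bool" where
  "is_prefix_tuple a k xs \<longleftrightarrow> length xs \<le> k - 1 \<and> (\<forall>j < length xs. xs ! j < a (k - j))"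

definition nonempty :: "(nat \<Rightarrow> nat) \<Rightarrow> nat \<Rightarrow> nat list set \<Rightarrow> nat list \<Rightarrow> bool" where
  "nonempty a k \<Phi> \<beta> \<longleftrightarrow> (\<exists>\<alpha>. inA a k \<alpha> \<and> take (length \<beta>) \<alpha> = \<beta> \<and> \<alpha> \<in> \<Phi>)"

definition full :: "(nat \<Rightarrow> nat) \<Rightarrow> nat \<Rightarrow> nat list set \<Rightarrow> nat list \<Rightarrow> bool" where
  "full a k \<Phi> \<beta> \<longleftrightarrow> (\<forall>\<alpha>. inA a k \<alpha> \<and> take (length \<beta>) \<alpha> = \<beta> \<longrightarrow> \<alpha> \<in> \<Phi>)"

text \<open>Next(\<beta>); the first nat argument is a recursion-depth counter (the number of
  coordinates still to be chosen); l = k - length \<beta>.\<close>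
fun nxt :: "(nat \<Rightarrow> nat) \<Rightarrow> nat \<Rightarrow> nat \<Rightarrow> nat list \<Rightarrow> nat list set \<Rightarrow> nat list set" where
  "nxt a k 0 \<beta> \<Phi> = \<Phi>"
| "nxt a k (Suc n) \<beta> \<Phi> =
     (let l = k - length \<beta>;
          m = (LEAST i. \<not> nonempty a k \<Phi> (\<beta> @ [i]))
      in if l = 2 then insert (\<beta> @ [m]) \<Phi>
         else (let m' = (if a 2 \<le> m then (LEAST i. \<not> full a k \<Phi> (\<beta> @ [i])) else m)
               in nxt a k n (\<beta> @ [m']) \<Phi>))"

definition next_empty :: "(nat \<Rightarrow> nat) \<Rightarrow> nat \<Rightarrow> nat list set \<Rightarrow> nat list set" where
  "next_empty a k \<Phi> = nxt a k (k - 1) [] \<Phi>"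

definition partial_listing :: "(nat \<Rightarrow> nat) \<Rightarrow> nat \<Rightarrow> nat list set \<Rightarrow> bool" where
  "partial_listing a k \<Phi> \<longleftrightarrow> (\<exists>n. \<Phi> = (next_empty a k ^^ n) {})"

end

theory Submission
  imports Defs
begin

definition chs :: "(nat \<Rightarrow> nat) \<Rightarrow> nat \<Rightarrow> nat list set \<Rightarrow> nat list \<Rightarrow> nat" where
  "chs a k \<Phi> \<beta> = (let m = (LEAST i. \<not> nonempty a k \<Phi> (\<beta> @ [i]))
     in if k - length \<beta> = 2 then m
        else if a 2 \<le> m then (LEAST i. \<not> full a k \<Phi> (\<beta> @ [i])) else m)"

lemma nxt_eq:
  "length \<beta> + n = k - 1 \<Longrightarrow> 0 < n \<Longrightarrow>
   \<exists>x. nxt a k n \<beta> \<Phi> = insert x \<Phi> \<and> length x = k - 1 \<and> take (length \<beta>) x = \<beta> \<and>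
       (\<forall>j. length \<beta> \<le> j \<and> j < k - 1 \<longrightarrow> x ! j = chs a k \<Phi> (take j x))"
proof (induction n arbitrary: \<beta>)
  case 0
  then show ?case by simp
next
  case (Suc n)
  define m where "m = (LEAST i. \<not> nonempty a k \<Phi> (\<beta> @ [i]))"
  show ?case
  proof (cases "n = 0")
    case True
    then have l2: "k - length \<beta> = 2" using Suc.prems by simp
    have e: "nxt a k (Suc n) \<beta> \<Phi> = insert (\<beta> @ [m]) \<Phi>"
      using l2 by (simp add: m_def Let_def)
    show ?thesis
    proof (intro exI conjI allI impI)
      show "nxt a k (Suc n) \<beta> \<Phi> = insert (\<beta> @ [m]) \<Phi>" by (rule e)
      show "length (\<beta> @ [m]) = k - 1" using Suc.prems True by simp
      show "take (length \<beta>) (\<beta> @ [m]) = \<beta>" by simp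
      fix j assume "length \<beta> \<le> j \<and> j < k - 1"
      then have "j = length \<beta>" using Suc.prems True by simp
      then show "(\<beta> @ [m]) ! j = chs a k \<Phi> (take j (\<beta> @ [m]))"
        using l2 by (simp add: chs_def m_def Let_def)
    qed
  next
    case False
    then have l2: "k - length \<beta> \<noteq> 2" using Suc.prems by simp
    define m' where "m' = (if a 2 \<le> m then (LEAST i. \<not> full a k \<Phi> (\<beta> @ [i])) else m)"
    have e: "nxt a k (Suc n) \<beta> \<Phi> = nxt a k n (\<beta> @ [m']) \<Phi>"
      using l2 by (simp add: m_def m'_def Let_def)
    have c: "m' = chs a k \<Phi> \<beta>"
      using l2 by (simp add: chs_def m_def m'_def Let_def)
    obtain x where x: "nxt a k n (\<beta> @ [m']) \<Phi> = insert x \<Phi>" "length x = k - 1"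
      "take (length (\<beta> @ [m'])) x = \<beta> @ [m']"
      "\<forall>j. length (\<beta> @ [m']) \<le> j \<and> j < k - 1 \<longrightarrow> x ! j = chs a k \<Phi> (take j x)"
      using Suc.IH[of "\<beta> @ [m']"] Suc.prems False by auto
    have tb: "take (length \<beta>) x = \<beta>"
      using x(3) by (metis append_eq_conv_conj length_append_singleton take_take min.absorb1 le_SucI le_refl)
    have xb: "x ! length \<beta> = m'"
      using x(3) by (metis length_append_singleton lessI nth_append_length nth_take)
    show ?thesis
    proof (intro exI conjI allI impI)
      show "nxt a k (Suc n) \<beta> \<Phi> = insert x \<Phi>" using e x(1) by simp
      show "length x = k - 1" by (rule x(2))
      show "take (length \<beta>) x = \<beta>" by (rule tb)
      fix j assume j: "length \<beta> \<le> j \<and> j < k - 1"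
      show "x ! j = chs a k \<Phi> (take j x)"
      proof (cases "j = length \<beta>")
        case True then show ?thesis using xb c tb by simp
      next
        case False then show ?thesis using j x(4) by simp
      qed
    qed
  qed
qed

definition good :: "(nat \<Rightarrow> nat) \<Rightarrow> nat \<Rightarrow> nat list set \<Rightarrow> nat list \<Rightarrow> bool" where
  "good a k \<Phi> x \<longleftrightarrow> length x = k - 1 \<and> (\<forall>j < k - 1. x ! j = chs a k \<Phi> (take j x))"

lemma next_eq:
  assumes "k \<ge> 2"
  shows "\<exists>x. next_empty a k \<Phi> = insert x \<Phi> \<and> good a k \<Phi> x"
  using nxt_eq[of "[]" "k - 1" k a \<Phi>] assms unfolding next_empty_def good_def by auto

lemma ext_range:
  assumes "inA a k \<alpha>" and t: "take (length \<beta>) \<alpha> = \<beta>"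
  shows "is_prefix_tuple a k \<beta>"
proof -
  have "min (length \<alpha>) (length \<beta>) = length \<beta>" using t by (metis length_take)
  then have l: "length \<beta> \<le> length \<alpha>" by simp
  show ?thesis unfolding is_prefix_tuple_def
  proof (intro conjI allI impI)
    show "length \<beta> \<le> k - 1" using l assms(1) by (simp add: inA_def)
    fix j assume j: "j < length \<beta>"
    have "\<beta> ! j = \<alpha> ! j" using j t by (metis nth_take)
    then show "\<beta> ! j < a (k - j)" using assms(1) j l by (simp add: inA_def)
  qed
qed

lemma nonempty_range: "nonempty a k \<Phi> \<beta> \<Longrightarrow> is_prefix_tuple a k \<beta>"
  unfolding nonempty_def using ext_range by blast

lemma notfull_range: "\<not> full a k \<Phi> \<beta> \<Longrightarrow> is_prefix_tuple a k \<beta>"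
  unfolding full_def using ext_range by blast

lemma ext_ne:
  assumes pos: "\<forall>i. 2 \<le> i \<and> i \<le> k \<longrightarrow> 0 < a i" and r: "is_prefix_tuple a k \<beta>"
  shows "\<exists>\<alpha>. inA a k \<alpha> \<and> take (length \<beta>) \<alpha> = \<beta>"
proof -
  let ?\<alpha> = "\<beta> @ replicate (k - 1 - length \<beta>) 0"
  have "inA a k ?\<alpha>"
    unfolding inA_def
  proof (intro conjI allI impI)
    show "length ?\<alpha> = k - 1" using r by (simp add: is_prefix_tuple_def, arith)
    fix j assume j: "j < length ?\<alpha>"
    show "?\<alpha> ! j < a (k - j)"
    proof (cases "j < length \<beta>")
      case True then show ?thesis using r by (simp add: is_prefix_tuple_def nth_append)
    next
      case False
      then have "?\<alpha> ! j = 0" using j by (simp add: nth_append)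
      moreover have "2 \<le> k - j" "k - j \<le> k" using j r False by (auto simp: is_prefix_tuple_def)
      ultimately show ?thesis using pos by simp
    qed
  qed
  then show ?thesis by (intro exI[of _ ?\<alpha>]) simp
qed

lemma full_nonempty:
  assumes pos: "\<forall>i. 2 \<le> i \<and> i \<le> k \<longrightarrow> 0 < a i" and r: "is_prefix_tuple a k \<beta>"
    and f: "full a k \<Phi> \<beta>"
  shows "nonempty a k \<Phi> \<beta>"
  using ext_ne[OF pos r] f unfolding full_def nonempty_def by blast

lemma empty_notfull:
  assumes pos: "\<forall>i. 2 \<le> i \<and> i \<le> k \<longrightarrow> 0 < a i" and r: "is_prefix_tuple a k \<beta>"
    and e: "\<not> nonempty a k \<Phi> \<beta>"
  shows "\<not> full a k \<Phi> \<beta>"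
  using full_nonempty[OF pos r] e by blast

lemma ex_empty_child: "\<exists>i. \<not> nonempty a k \<Phi> (\<beta> @ [i])"
proof
  show "\<not> nonempty a k \<Phi> (\<beta> @ [a (k - length \<beta>)])"
  proof
    assume "nonempty a k \<Phi> (\<beta> @ [a (k - length \<beta>)])"
    then have "is_prefix_tuple a k (\<beta> @ [a (k - length \<beta>)])" by (rule nonempty_range)
    then show False unfolding is_prefix_tuple_def
      by (metis length_append_singleton lessI less_irrefl nth_append_length)
  qed
qed

lemma range_smaller:
  "is_prefix_tuple a k (\<beta> @ [c]) \<Longrightarrow> i \<le> c \<Longrightarrow> is_prefix_tuple a k (\<beta> @ [i])"
  unfolding is_prefix_tuple_def
  by (auto simp: nth_append split: if_splits)

lemma C1:
  assumes pos: "\<forall>i. 2 \<le> i \<and> i \<le> k \<longrightarrow> 0 < a i"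
    and c: "chs a k \<Phi> \<beta> = c" and r: "is_prefix_tuple a k (\<beta> @ [c])"
    and e: "\<not> nonempty a k \<Phi> (\<beta> @ [c])" and i: "i < c"
  shows "nonempty a k \<Phi> (\<beta> @ [i])"
proof -
  define m where "m = (LEAST i. \<not> nonempty a k \<Phi> (\<beta> @ [i]))"
  show ?thesis
  proof (cases "c = m")
    case True then show ?thesis using i not_less_Least unfolding m_def by blast
  next
    case False
    then have c2: "c = (LEAST i. \<not> full a k \<Phi> (\<beta> @ [i]))"
      using c unfolding chs_def m_def[symmetric] Let_def by (auto split: if_splits)
    have "full a k \<Phi> (\<beta> @ [i])" using i c2 not_less_Least by blast
    moreover have "is_prefix_tuple a k (\<beta> @ [i])" using range_smaller[OF r] i by simp
    ultimately show ?thesis using full_nonempty[OF pos] by blast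
  qed
qed

lemma C2:
  assumes c: "chs a k \<Phi> \<beta> = c" and ne: "nonempty a k \<Phi> (\<beta> @ [c])"
  shows "(\<forall>i < a 2. nonempty a k \<Phi> (\<beta> @ [i])) \<and> (\<forall>i < c. full a k \<Phi> (\<beta> @ [i]))"
proof -
  define m where "m = (LEAST i. \<not> nonempty a k \<Phi> (\<beta> @ [i]))"
  have me: "\<not> nonempty a k \<Phi> (\<beta> @ [m])" unfolding m_def
    using ex_empty_child by (rule LeastI_ex)
  then have "c \<noteq> m" using ne by auto
  then have h: "k - length \<beta> \<noteq> 2" "a 2 \<le> m" "c = (LEAST i. \<not> full a k \<Phi> (\<beta> @ [i]))"
    using c unfolding chs_def m_def[symmetric] Let_def by (auto split: if_splits)
  show ?thesis
  proof (intro conjI allI impI)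
    fix i assume "i < a 2"
    then have "i < m" using h by simp
    then show "nonempty a k \<Phi> (\<beta> @ [i])" using not_less_Least unfolding m_def by blast
  next
    fix i assume "i < c"
    then show "full a k \<Phi> (\<beta> @ [i])" using h(3) not_less_Least by blast
  qed
qed

definition invI :: "(nat \<Rightarrow> nat) \<Rightarrow> nat \<Rightarrow> nat list set \<Rightarrow> bool" where
  "invI a k \<Phi> \<longleftrightarrow> (\<forall>\<beta> i j. i < j \<and> j < a 2 \<and> nonempty a k \<Phi> (\<beta> @ [j]) \<longrightarrow> nonempty a k \<Phi> (\<beta> @ [i]))"

definition two :: "(nat \<Rightarrow> nat) \<Rightarrow> nat \<Rightarrow> nat list set \<Rightarrow> nat list \<Rightarrow> bool" where
  "two a k \<Phi> \<delta> \<longleftrightarrow> (\<exists>\<alpha>1 \<alpha>2. \<alpha>1 \<noteq> \<alpha>2 \<and> \<alpha>1 \<in> \<Phi> \<and> \<alpha>2 \<in> \<Phi> \<and> inA a k \<alpha>1 \<and> inA a k \<alpha>2 \<and>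
      take (length \<delta>) \<alpha>1 = \<delta> \<and> take (length \<delta>) \<alpha>2 = \<delta>)"

definition invL :: "(nat \<Rightarrow> nat) \<Rightarrow> nat \<Rightarrow> nat list set \<Rightarrow> bool" where
  "invL a k \<Phi> \<longleftrightarrow> (\<forall>\<gamma> c. two a k \<Phi> (\<gamma> @ [c]) \<longrightarrow>
      (\<forall>i < a 2. nonempty a k \<Phi> (\<gamma> @ [i])) \<and> (\<forall>i < c. full a k \<Phi> (\<gamma> @ [i])))"

lemma nonempty_mono: "nonempty a k \<Phi> \<beta> \<Longrightarrow> nonempty a k (insert x \<Phi>) \<beta>"
  unfolding nonempty_def by blast

lemma full_mono: "full a k \<Phi> \<beta> \<Longrightarrow> full a k (insert x \<Phi>) \<beta>"
  unfolding full_def by blast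

lemma path_choice:
  assumes g: "good a k \<Phi> x" and x: "inA a k x"
    and t: "take (length \<beta> + 1) x = \<beta> @ [c]"
  shows "chs a k \<Phi> \<beta> = c"
proof -
  have l: "length \<beta> < length x"
  proof -
    have "min (length x) (length \<beta> + 1) = length \<beta> + 1" using t by (metis length_append_singleton length_take Suc_eq_plus1)
    then show ?thesis by simp
  qed
  have "take (Suc (length \<beta>)) x = take (length \<beta>) x @ [x ! length \<beta>]"
    using l by (rule take_Suc_conv_app_nth)
  then have "take (length \<beta>) x = \<beta>" "x ! length \<beta> = c" using t by auto
  moreover have "length \<beta> < k - 1" using l g by (simp add: good_def)
  ultimately show ?thesis using g unfolding good_def by metis
qed

lemma step_inv:
  assumes pos: "\<forall>i. 2 \<le> i \<and> i \<le> k \<longrightarrow> 0 < a i"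
    and g: "good a k \<Phi> x" and I: "invI a k \<Phi>" and L: "invL a k \<Phi>"
  shows "invI a k (insert x \<Phi>) \<and> invL a k (insert x \<Phi>)"
proof
  show "invI a k (insert x \<Phi>)"
    unfolding invI_def
  proof (intro allI impI)
    fix \<beta> i j assume h: "i < j \<and> j < a 2 \<and> nonempty a k (insert x \<Phi>) (\<beta> @ [j])"
    show "nonempty a k (insert x \<Phi>) (\<beta> @ [i])"
    proof (cases "nonempty a k \<Phi> (\<beta> @ [j])")
      case True
      then show ?thesis using I h unfolding invI_def by (blast intro: nonempty_mono)
    next
      case False
      then have xa: "inA a k x" "take (length \<beta> + 1) x = \<beta> @ [j]"
        using h unfolding nonempty_def by auto
      have "chs a k \<Phi> \<beta> = j" using path_choice[OF g xa] .
      moreover have "is_prefix_tuple a k (\<beta> @ [j])" using ext_range[of a k x "\<beta> @ [j]"] xa by simp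
      ultimately have "nonempty a k \<Phi> (\<beta> @ [i])" using C1[OF pos _ _ False] h by blast
      then show ?thesis by (rule nonempty_mono)
    qed
  qed
next
  show "invL a k (insert x \<Phi>)"
    unfolding invL_def
  proof (intro allI impI)
    fix \<gamma> c assume h: "two a k (insert x \<Phi>) (\<gamma> @ [c])"
    show "(\<forall>i < a 2. nonempty a k (insert x \<Phi>) (\<gamma> @ [i])) \<and> (\<forall>i < c. full a k (insert x \<Phi>) (\<gamma> @ [i]))"
    proof (cases "two a k \<Phi> (\<gamma> @ [c])")
      case True
      then show ?thesis using L unfolding invL_def by (blast intro: nonempty_mono full_mono)
    next
      case False
      then have "nonempty a k \<Phi> (\<gamma> @ [c]) \<and> inA a k x \<and> take (length \<gamma> + 1) x = \<gamma> @ [c]"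
        using h unfolding two_def nonempty_def
        by (smt (verit) insert_iff length_append_singleton Suc_eq_plus1)
      then have "nonempty a k \<Phi> (\<gamma> @ [c])" "chs a k \<Phi> \<gamma> = c"
        using path_choice[OF g] by auto
      then show ?thesis using C2 by (blast intro: nonempty_mono full_mono)
    qed
  qed
qed

lemma listing_inv:
  assumes k: "k \<ge> 2" and pos: "\<forall>i. 2 \<le> i \<and> i \<le> k \<longrightarrow> 0 < a i"
  shows "invI a k ((next_empty a k ^^ n) {}) \<and> invL a k ((next_empty a k ^^ n) {})"
proof (induction n)
  case 0
  then show ?case by (simp add: invI_def invL_def nonempty_def two_def)
next
  case (Suc n)
  obtain x where "next_empty a k ((next_empty a k ^^ n) {}) = insert x ((next_empty a k ^^ n) {})"
    "good a k ((next_empty a k ^^ n) {}) x"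
    using next_eq[OF k] by blast
  then show ?case using step_inv[OF pos] Suc.IH by simp
qed

lemma notfull_child:
  assumes nf: "\<not> full a k \<Phi> \<beta>" and l: "length \<beta> < k - 1"
  obtains \<alpha> where "inA a k \<alpha>" "take (length \<beta>) \<alpha> = \<beta>" "\<alpha> \<notin> \<Phi>"
    "take (length \<beta> + 1) \<alpha> = \<beta> @ [\<alpha> ! length \<beta>]" "\<not> full a k \<Phi> (\<beta> @ [\<alpha> ! length \<beta>])"
proof -
  obtain \<alpha> where a: "inA a k \<alpha>" "take (length \<beta>) \<alpha> = \<beta>" "\<alpha> \<notin> \<Phi>"
    using nf unfolding full_def by blast
  have "length \<beta> < length \<alpha>" using a(1) l by (simp add: inA_def)
  then have t: "take (length \<beta> + 1) \<alpha> = \<beta> @ [\<alpha> ! length \<beta>]"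
    using a(2) by (simp add: take_Suc_conv_app_nth)
  have "\<not> full a k \<Phi> (\<beta> @ [\<alpha> ! length \<beta>])"
    using a t unfolding full_def by auto
  then show ?thesis using that a t by blast
qed

lemma reach_step:
  assumes pos: "\<forall>i. 2 \<le> i \<and> i \<le> k \<longrightarrow> 0 < a i"
    and mono: "\<forall>i. 2 < i \<and> i \<le> k \<longrightarrow> a 2 \<le> a i"
    and nfb: "\<not> full a k \<Phi> \<beta>" and lbk: "length \<beta> < k - 1"
  shows "\<not> full a k \<Phi> (\<beta> @ [chs a k \<Phi> \<beta>])"
proof -
  have rb: "is_prefix_tuple a k \<beta>" using notfull_range[OF nfb] .
  define m where "m = (LEAST i. \<not> nonempty a k \<Phi> (\<beta> @ [i]))"
  have me: "\<not> nonempty a k \<Phi> (\<beta> @ [m])" unfolding m_def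
    using ex_empty_child by (rule LeastI_ex)
  obtain \<alpha> where al: "inA a k \<alpha>" "take (length \<beta>) \<alpha> = \<beta>" "\<alpha> \<notin> \<Phi>"
    "take (length \<beta> + 1) \<alpha> = \<beta> @ [\<alpha> ! length \<beta>]" "\<not> full a k \<Phi> (\<beta> @ [\<alpha> ! length \<beta>])"
    using notfull_child[OF nfb lbk] by blast
  show ?thesis
  proof (cases "k - length \<beta> = 2")
    case True
    have c: "chs a k \<Phi> \<beta> = m" by (simp only: chs_def m_def[symmetric] Let_def True if_True refl)
    have la: "length \<alpha> = length \<beta> + 1" using al(1) True by (simp add: inA_def)
    then have ta: "take (length \<beta> + 1) \<alpha> = \<alpha>" by simp
    have "\<not> nonempty a k \<Phi> (\<beta> @ [\<alpha> ! length \<beta>])"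
    proof
      assume "nonempty a k \<Phi> (\<beta> @ [\<alpha> ! length \<beta>])"
      then obtain \<alpha>' where a': "inA a k \<alpha>'" "take (length \<beta> + 1) \<alpha>' = \<beta> @ [\<alpha> ! length \<beta>]" "\<alpha>' \<in> \<Phi>"
        unfolding nonempty_def by auto
      have "length \<alpha>' = length \<beta> + 1" using a'(1) la al(1) by (simp add: inA_def)
      then have "\<alpha>' = \<alpha>" using a'(2) al(4) ta by simp
      then show False using a'(3) al(3) by simp
    qed
    then have "m \<le> \<alpha> ! length \<beta>" unfolding m_def by (rule Least_le)
    then have "is_prefix_tuple a k (\<beta> @ [m])"
      using range_smaller[of a k \<beta> "\<alpha> ! length \<beta>" m] notfull_range[OF al(5)] by simp
    then show ?thesis using c empty_notfull[OF pos _ me] by simp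
  next
    case False
    show ?thesis
    proof (cases "a 2 \<le> m")
      case True
      then have c: "chs a k \<Phi> \<beta> = (LEAST i. \<not> full a k \<Phi> (\<beta> @ [i]))"
        using False by (simp add: chs_def m_def[symmetric] Let_def)
      show ?thesis unfolding c using al(5) by (rule LeastI)
    next
      case F2: False
      then have c: "chs a k \<Phi> \<beta> = m"
        using False by (simp add: chs_def m_def[symmetric] Let_def)
      have "2 < k - length \<beta>" "k - length \<beta> \<le> k" using False lbk by auto
      then have "a 2 \<le> a (k - length \<beta>)" using mono by simp
      then have "m < a (k - length \<beta>)" using F2 by simp
      then have "is_prefix_tuple a k (\<beta> @ [m])"
        using rb lbk unfolding is_prefix_tuple_def by (auto simp: nth_append less_Suc_eq)
      then show ?thesis using c empty_notfull[OF pos _ me] by simp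
    qed
  qed
qed

lemma reach_inA:
  assumes pos: "\<forall>i. 2 \<le> i \<and> i \<le> k \<longrightarrow> 0 < a i"
    and mono: "\<forall>i. 2 < i \<and> i \<le> k \<longrightarrow> a 2 \<le> a i"
    and g: "good a k \<Phi> x" and nf: "\<not> full a k \<Phi> []"
  shows "inA a k x"
proof -
  have lx: "length x = k - 1" using g by (simp add: good_def)
  have "j \<le> k - 1 \<Longrightarrow> \<not> full a k \<Phi> (take j x)" for j
  proof (induction j)
    case 0 then show ?case using nf by simp
  next
    case (Suc j)
    have jl: "j < length x" using Suc.prems lx by simp
    have ts: "take (Suc j) x = take j x @ [chs a k \<Phi> (take j x)]"
      using jl g lx by (simp add: take_Suc_conv_app_nth good_def)
    have "\<not> full a k \<Phi> (take j x @ [chs a k \<Phi> (take j x)])"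
      by (rule reach_step[OF pos mono]) (use Suc jl lx in auto)
    then show ?case using ts by simp
  qed
  from this[of "k - 1"] have "is_prefix_tuple a k x" using lx notfull_range by simp
  then show ?thesis using lx by (simp add: is_prefix_tuple_def inA_def)
qed

lemma take_pre:
  assumes "take (length \<alpha>' + 1) \<alpha> = \<alpha>' @ [e]" "j \<le> length \<alpha>'"
  shows "take j \<alpha> = take j \<alpha>'"
proof -
  have "take j \<alpha> = take j (take (length \<alpha>' + 1) \<alpha>)" using assms(2) by (simp add: min_def)
  also have "\<dots> = take j (\<alpha>' @ [e])" using assms(1) by simp
  also have "\<dots> = take j \<alpha>'" using assms(2) by simp
  finally show ?thesis .
qed

lemma nth_pre:
  assumes "take (length \<alpha>' + 1) \<alpha> = \<alpha>' @ [e]"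
  shows "\<alpha> ! length \<alpha>' = e"
proof -
  have "length \<alpha>' < length \<alpha>"
  proof -
    have "min (length \<alpha>) (length \<alpha>' + 1) = length \<alpha>' + 1" using assms by (metis length_append_singleton length_take Suc_eq_plus1)
    then show ?thesis by simp
  qed
  then have "(take (length \<alpha>' + 1) \<alpha>) ! length \<alpha>' = \<alpha> ! length \<alpha>'" by simp
  then show ?thesis using assms by (metis nth_append_length)
qed

theorem lemma7:
  fixes a :: "nat \<Rightarrow> nat" and k l d :: nat and \<alpha>' :: "nat list" and \<Phi> :: "nat list set"
  assumes "k \<ge> 2"
    and "\<forall>i. 2 \<le> i \<and> i \<le> k \<longrightarrow> 0 < a i"
    and "\<forall>i. 2 < i \<and> i \<le> k \<longrightarrow> a 2 \<le> a i"
    and "partial_listing a k \<Phi>"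
    and "3 \<le> l + 1" and "l + 1 \<le> k"
    and "length \<alpha>' = k - l" and "is_prefix_tuple a k \<alpha>'"
    and "0 < d" and "d < a 2 - 1"
    and "nonempty a k \<Phi> (\<alpha>' @ [d])"
  shows "nonempty a k \<Phi> (\<alpha>' @ [d - 1]) \<and>
         (nonempty a k \<Phi> (\<alpha>' @ [d + 1]) \<or> nonempty a k (next_empty a k \<Phi>) (\<alpha>' @ [d + 1]))"
proof -
  note k = assms(1) and pos = assms(2) and mono = assms(3)
  note ne = assms(11)
  define p where "p = length \<alpha>'"
  have pk: "p < k - 1" "p + l = k" using assms(5,6,7) by (auto simp: p_def)
  have d2: "d + 1 < a 2" using assms(10) by simp
  obtain n where "\<Phi> = (next_empty a k ^^ n) {}" using assms(4) by (auto simp: partial_listing_def)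
  then have I: "invI a k \<Phi>" and L: "invL a k \<Phi>" using listing_inv[OF k pos] by auto
  have part1: "nonempty a k \<Phi> (\<alpha>' @ [d - 1])"
    using I ne assms(9) d2 unfolding invI_def by (metis diff_less less_one add_lessD1)
  have ne0: "nonempty a k \<Phi> (\<alpha>' @ [0])"
    using I ne assms(9) d2 unfolding invI_def by (metis add_lessD1)
  have part2: "nonempty a k (next_empty a k \<Phi>) (\<alpha>' @ [d + 1])"
    if emp: "\<not> nonempty a k \<Phi> (\<alpha>' @ [d + 1])"
  proof -
    obtain x where nx: "next_empty a k \<Phi> = insert x \<Phi>" and g: "good a k \<Phi> x"
      using next_eq[OF k] by blast
    have lx: "length x = k - 1" using g by (simp add: good_def)
    have "a 2 \<le> a (k - p)"
    proof (cases "l = 2")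
      case True
      then have "k - p = 2" using pk by simp
      then show ?thesis by simp
    next
      case False then show ?thesis using pk mono assms(5) by simp
    qed
    then have "d + 1 < a (k - length \<alpha>')" using d2 p_def by simp
    then have rP: "is_prefix_tuple a k (\<alpha>' @ [d + 1])"
      using assms(8) pk unfolding is_prefix_tuple_def p_def by (auto simp: nth_append less_Suc_eq)
    obtain \<alpha>3 where a3: "inA a k \<alpha>3" "take (p + 1) \<alpha>3 = \<alpha>' @ [d + 1]"
      using ext_ne[OF pos rP] p_def by auto
    have a3n: "\<alpha>3 \<notin> \<Phi>" using emp a3 unfolding nonempty_def p_def by auto
    have nf: "\<not> full a k \<Phi> []" using a3 a3n unfolding full_def by auto
    have xA: "inA a k x" using reach_inA[OF pos mono g nf] .
    obtain \<alpha>1 where a1: "inA a k \<alpha>1" "take (p + 1) \<alpha>1 = \<alpha>' @ [d]" "\<alpha>1 \<in> \<Phi>"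
      using ne p_def unfolding nonempty_def by auto
    obtain \<alpha>2 where a2: "inA a k \<alpha>2" "take (p + 1) \<alpha>2 = \<alpha>' @ [0]" "\<alpha>2 \<in> \<Phi>"
      using ne0 p_def unfolding nonempty_def by auto
    have a12: "\<alpha>1 \<noteq> \<alpha>2" using nth_pre[OF a1(2)[unfolded p_def]] nth_pre[OF a2(2)[unfolded p_def]] assms(9) by auto
    have path: "j \<le> p \<Longrightarrow> take j x = take j \<alpha>'" for j
    proof (induction j)
      case 0 then show ?case by simp
    next
      case (Suc j)
      define \<beta> where "\<beta> = take j \<alpha>'"
      define c where "c = \<alpha>' ! j"
      have jp: "j < p" using Suc.prems by simp
      have lb: "length \<beta> = j" using jp by (simp add: \<beta>_def p_def)
      have tc: "take (Suc j) \<alpha>' = \<beta> @ [c]" using jp by (simp add: \<beta>_def c_def p_def take_Suc_conv_app_nth)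
      have t1: "take (length (\<beta> @ [c])) \<alpha>1 = \<beta> @ [c]"
        using take_pre[OF a1(2)[unfolded p_def], of "Suc j"] jp tc lb p_def by simp
      have t2: "take (length (\<beta> @ [c])) \<alpha>2 = \<beta> @ [c]"
        using take_pre[OF a2(2)[unfolded p_def], of "Suc j"] jp tc lb p_def by simp
      have t3: "take (length (\<beta> @ [c])) \<alpha>3 = \<beta> @ [c]"
        using take_pre[OF a3(2)[unfolded p_def], of "Suc j"] jp tc lb p_def by simp
      have "two a k \<Phi> (\<beta> @ [c])" unfolding two_def using a1 a2 a12 t1 t2 by blast
      then have LL: "\<forall>i < a 2. nonempty a k \<Phi> (\<beta> @ [i])" "\<forall>i < c. full a k \<Phi> (\<beta> @ [i])"
        using L unfolding invL_def by auto
      define m where "m = (LEAST i. \<not> nonempty a k \<Phi> (\<beta> @ [i]))"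
      have me: "\<not> nonempty a k \<Phi> (\<beta> @ [m])" unfolding m_def
        using ex_empty_child by (rule LeastI_ex)
      have am: "a 2 \<le> m" using me LL(1) by (meson not_le)
      have kl: "\<not> (k - length \<beta> = 2)" using lb jp pk by simp
      have nfc: "\<not> full a k \<Phi> (\<beta> @ [c])" using a3 a3n t3 unfolding full_def by blast
      have "(LEAST i. \<not> full a k \<Phi> (\<beta> @ [i])) = c"
      proof (rule Least_equality)
        show "\<not> full a k \<Phi> (\<beta> @ [c])" by (rule nfc)
        fix y assume "\<not> full a k \<Phi> (\<beta> @ [y])"
        then show "c \<le> y" using LL(2) by (meson not_le)
      qed
      then have ch: "chs a k \<Phi> \<beta> = c"
        using am kl by (simp add: chs_def m_def[symmetric] Let_def)
      have jx: "j < length x" using jp pk lx by simp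
      have "take (Suc j) x = take j x @ [x ! j]" using jx by (rule take_Suc_conv_app_nth)
      also have "x ! j = chs a k \<Phi> (take j x)" using g jx lx by (simp add: good_def)
      also have "take j x = \<beta>" using Suc.IH jp \<beta>_def by simp
      finally show ?case using ch tc by simp
    qed
    have tp: "take p x = \<alpha>'" using path[of p] by (simp add: p_def)
    have "(LEAST i. \<not> nonempty a k \<Phi> (\<alpha>' @ [i])) = d + 1"
    proof (rule Least_equality)
      show "\<not> nonempty a k \<Phi> (\<alpha>' @ [d + 1])" by (rule emp)
      fix y assume ye: "\<not> nonempty a k \<Phi> (\<alpha>' @ [y])"
      show "d + 1 \<le> y"
      proof (rule ccontr)
        assume "\<not> d + 1 \<le> y"
        then have "y < d \<or> y = d" by auto
        moreover have "y < d \<Longrightarrow> nonempty a k \<Phi> (\<alpha>' @ [y])"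
          using ne I d2 unfolding invI_def by (meson add_lessD1)
        ultimately show False using ye ne by auto
      qed
    qed
    then have ch: "chs a k \<Phi> \<alpha>' = d + 1"
      using d2 by (simp add: chs_def Let_def)
    have px: "p < length x" using pk lx by simp
    have "take (p + 1) x = take p x @ [x ! p]" using px by (simp add: take_Suc_conv_app_nth)
    also have "x ! p = chs a k \<Phi> (take p x)" using g px lx by (simp add: good_def)
    finally have "take (p + 1) x = \<alpha>' @ [d + 1]" using tp ch by simp
    then show ?thesis using nx xA unfolding nonempty_def p_def by auto
  qed
  show ?thesis using part1 part2 by blast
qed

end
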